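(* Let $A\succeq0$ be an $m\times m$ diagonal matrix and $M\succ0$ an $m\times m$ matrix, and let $M_{diag}$ denote the diagonal matrix with the same diagonal as $M$. Then $[(M_{diag})^{-1}+A]^{-1}\succeq\big([M^{-1}+A]^{-1}\big)_{diag}$.
   Context: For a square matrix $E$, $(E)_{diag}$ is the diagonal matrix whose diagonal entries equal those of $E$. $P\succeq Q$ means $P-Q$ is positive semidefinite; $M\succ0$ means positive definite. *)

theory Defs
  imports "HOL-Analysis.Analysis"
begin

definition psd_mat :: "real^'n^'n \<Rightarrow> bool" where
  "psd_mat P \<longleftrightarrow> transpose P = P \<and> (\<forall>x. 0 \<le> x \<bullet> (P *v x))"

definition pd_mat :: "real^'n^'n \<Rightarrow> bool" where
  "pd_mat P \<longleftrightarrow> transpose P = P \<and> (\<forall>x. x \<noteq> 0 \<longrightarrow> 0 < x \<bullet> (P *v x))"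

definition loewner_ge :: "real^'n^'n \<Rightarrow> real^'n^'n \<Rightarrow> bool" where
  "loewner_ge P Q \<longleftrightarrow> psd_mat (P - Q)"

definition diag_part :: "real^'n^'n \<Rightarrow> real^'n^'n" where
  "diag_part E = (\<chi> i j. if i = j then E $ i $ i else 0)"

definition is_diag_mat :: "real^'n^'n \<Rightarrow> bool" where
  "is_diag_mat A \<longleftrightarrow> (\<forall>i j. i \<noteq> j \<longrightarrow> A $ i $ j = 0)"

end

theory Submission
  imports Defs
begin

lemma sym_inner:
  fixes M :: "real^'n^'n"
  assumes "transpose M = M"
  shows "x \<bullet> (M *v y) = y \<bullet> (M *v x)"
proof -
  have "x \<bullet> (M *v y) = (x v* M) \<bullet> y" by (simp add: dot_lmul_matrix)
  also have "x v* M = transpose M *v x" by simp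
  finally show ?thesis using assms by (simp add: inner_commute)
qed

lemma inv_props:
  fixes A :: "real^'n^'n"
  assumes "invertible A"
  shows "A ** matrix_inv A = mat 1 \<and> matrix_inv A ** A = mat 1"
  using assms unfolding invertible_def matrix_inv_def by (rule someI_ex)

lemma inv_unique:
  fixes A B :: "real^'n^'n"
  assumes "A ** B = mat 1" "B ** A = mat 1"
  shows "matrix_inv A = B"
proof -
  have inv: "invertible A" using assms invertible_def by blast
  have "matrix_inv A = (B ** A) ** matrix_inv A" using assms by simp
  also have "\<dots> = B ** (A ** matrix_inv A)" by (simp add: matrix_mul_assoc)
  also have "\<dots> = B" using inv_props[OF inv] by simp
  finally show ?thesis .
qed

lemma pd_invertible:
  fixes M :: "real^'n^'n"
  assumes "\<And>x. M *v x = 0 \<Longrightarrow> x = 0"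
  shows "invertible M"
  using assms by (metis invertible_left_inverse matrix_left_invertible_ker)

lemma ifz1[simp]: "(if P then (a::real) else 0) * b = (if P then a * b else 0)" by simp
lemma ifz2[simp]: "b * (if P then (a::real) else 0) = (if P then b * a else 0)" by simp

definition dg :: "('n \<Rightarrow> real) \<Rightarrow> real^'n^'n" where
  "dg f = (\<chi> i j. if i = j then f i else 0)"

lemma dg_mult: "dg f ** dg g = dg (\<lambda>i. f i * g i)"
  by (simp add: dg_def matrix_matrix_mult_def vec_eq_iff cong: if_cong)

lemma dg_one: "dg (\<lambda>i. 1) = mat 1"
  by (simp add: dg_def mat_def vec_eq_iff)

lemma dg_inv: assumes "\<And>i. f i \<noteq> 0" shows "matrix_inv (dg f) = dg (\<lambda>i. inverse (f i))"
  by (rule inv_unique) (simp_all add: dg_mult assms dg_one[symmetric])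

lemma dg_add: "dg f + dg g = dg (\<lambda>i. f i + g i)"
  by (simp add: dg_def vec_eq_iff)

lemma dg_diff: "dg f - dg g = dg (\<lambda>i. f i - g i)"
  by (simp add: dg_def vec_eq_iff)

lemma dg_psd: assumes "\<And>i. f i \<ge> 0" shows "psd_mat (dg f)"
proof -
  have "transpose (dg f) = dg f" by (simp add: dg_def transpose_def vec_eq_iff)
  moreover have "x \<bullet> (dg f *v x) = (\<Sum>i\<in>UNIV. f i * (x$i)^2)" for x
    by (simp add: dg_def matrix_vector_mult_def inner_vec_def power2_eq_square
       mult_ac cong: if_cong)
  ultimately show ?thesis unfolding psd_mat_def using assms by (simp add: sum_nonneg)
qed

lemma diag_part_dg: "diag_part M = dg (\<lambda>i. M$i$i)"
  by (simp add: diag_part_def dg_def)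

lemma is_diag_dg: "is_diag_mat A \<Longrightarrow> A = dg (\<lambda>i. A$i$i)"
  by (auto simp: is_diag_mat_def dg_def vec_eq_iff)

lemma quad_axis: "axis i 1 \<bullet> ((M::real^'n^'n) *v axis i 1) = M$i$i"
  by (simp add: inner_vec_def matrix_vector_mult_def axis_def)

lemma diag_quad:
  fixes A :: "real^'n^'n"
  assumes "is_diag_mat A"
  shows "y \<bullet> (A *v y) = (\<Sum>j\<in>UNIV. A$j$j * (y$j)^2)"
  apply (subst is_diag_dg[OF assms])
  by (simp add: dg_def matrix_vector_mult_def inner_vec_def power2_eq_square
       mult_ac cong: if_cong)


lemma final_ineq:
  fixes a b c m :: real
  assumes "b^2 \<le> m * c" "0 \<le> c" "c + a * b^2 \<le> b" "0 \<le> a" "0 < m"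
  shows "b * (1 + a * m) \<le> m"
proof (cases "b \<le> 0")
  case True
  have "0 \<le> 1 + a * m" using assms by simp
  hence "b * (1 + a * m) \<le> 0" using True by (simp add: mult_nonpos_nonneg)
  then show ?thesis using assms by simp
next
  case False
  have "b^2 \<le> m * (b - a * b^2)" using assms by (smt (verit) mult_left_mono)
  hence "b * b \<le> b * (m * (1 - a * b))" by (simp add: power2_eq_square algebra_simps)
  hence "b \<le> m * (1 - a * b)" using False by simp
  thus ?thesis by (simp add: algebra_simps)
qed

lemma key:
  fixes A M :: "real^'n^'n"
  assumes Ad: "is_diag_mat A" and Ap: "psd_mat A" and Mp: "pd_mat M"
  shows "invertible M \<and> invertible (matrix_inv M + A) \<and>
    matrix_inv (matrix_inv M + A) $ i $ i * (1 + A$i$i * M$i$i) \<le> M$i$i"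
proof -
  have Ms: "transpose M = M" and Mpos: "\<And>x. x \<noteq> 0 \<Longrightarrow> 0 < x \<bullet> (M *v x)"
    using Mp unfolding pd_mat_def by auto
  have Mnn: "0 \<le> x \<bullet> (M *v x)" for x using Mpos[of x] by (cases "x = 0") auto
  have Apos: "0 \<le> x \<bullet> (A *v x)" for x using Ap unfolding psd_mat_def by auto
  have invM: "invertible M"
    by (rule pd_invertible) (metis Mpos inner_zero_right less_irrefl)
  define Q where "Q = matrix_inv M"
  have MQ: "M ** Q = mat 1" and QM: "Q ** M = mat 1" using inv_props[OF invM] Q_def by auto
  have Qq: "x \<bullet> (Q *v x) = (Q *v x) \<bullet> (M *v (Q *v x))" for x
  proof -
    have "x = M *v (Q *v x)" by (simp add: matrix_vector_mul_assoc MQ)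
    hence "x \<bullet> (Q *v x) = (M *v (Q *v x)) \<bullet> (Q *v x)" by simp
    thus ?thesis by (simp add: inner_commute)
  qed
  define P where "P = Q + A"
  have Pq: "x \<bullet> (P *v x) = x \<bullet> (Q *v x) + x \<bullet> (A *v x)" for x
    by (simp add: P_def matrix_vector_mult_add_rdistrib inner_add_right)
  have invP: "invertible P"
  proof (rule pd_invertible)
    fix x assume "P *v x = 0"
    hence "x \<bullet> (P *v x) = 0" by simp
    hence "x \<bullet> (Q *v x) = 0" using Pq[of x] Apos[of x] Qq[of x] Mnn[of "Q *v x"] by linarith
    hence "Q *v x = 0" using Qq[of x] Mpos by force
    hence "M *v (Q *v x) = 0" by simp
    thus "x = 0" by (simp add: matrix_vector_mul_assoc MQ)
  qed
  define N where "N = matrix_inv P"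
  have PN: "P ** N = mat 1" using inv_props[OF invP] N_def by auto
  define e :: "real^'n" where "e = axis i 1"
  define y where "y = N *v e"
  have Py: "P *v y = e" by (simp add: y_def matrix_vector_mul_assoc PN)
  define b where "b = y $ i"
  have bN: "b = N $ i $ i" by (simp add: b_def y_def e_def matrix_vector_mult_def axis_def)
  have be: "b = y \<bullet> e" by (simp add: b_def e_def inner_axis)
  define w where "w = Q *v y"
  have yw: "y = M *v w" by (simp add: w_def matrix_vector_mul_assoc MQ)
  define c where "c = w \<bullet> (M *v w)"
  define m where "m = M $ i $ i"
  have me: "m = e \<bullet> (M *v e)" by (simp add: m_def e_def quad_axis)
  have mpos: "0 < m" using Mpos[of e] me by (simp add: e_def)
  have c0: "0 \<le> c" using Mnn c_def by simp
  have yQ: "y \<bullet> (Q *v y) = c" using Qq[of y] by (simp add: c_def w_def)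
  have yA: "A$i$i * b^2 \<le> y \<bullet> (A *v y)"
  proof -
    have nn: "0 \<le> A$j$j" for j using Apos[of "axis j 1"] by (simp add: quad_axis)
    have "A$i$i * b^2 = A$i$i * (y$i)^2" by (simp add: b_def)
    also have "\<dots> \<le> (\<Sum>j\<in>UNIV. A$j$j * (y$j)^2)"
      by (rule member_le_sum) (auto simp: nn)
    finally show ?thesis by (simp add: diag_quad[OF Ad])
  qed
  have bP: "b = y \<bullet> (P *v y)" using be Py by simp
  have h3: "c + A$i$i * b^2 \<le> b" using bP Pq[of y] yQ yA by linarith
  have ebw: "e \<bullet> (M *v w) = b" using be yw by (simp add: inner_commute)
  have cs: "b^2 \<le> m * c"
  proof -
    define s where "s = b / m"
    have "0 \<le> (w - s *\<^sub>R e) \<bullet> (M *v (w - s *\<^sub>R e))" by (rule Mnn)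
    also have "\<dots> = c - 2 * s * b + s^2 * m"
      using sym_inner[OF Ms, of w e]
      by (simp add: matrix_vector_mult_diff_distrib matrix_vector_mult_scaleR inner_diff_left
          inner_diff_right c_def ebw me[symmetric] power2_eq_square algebra_simps)
    also have "\<dots> = c - b^2 / m" using mpos by (simp add: s_def field_simps power2_eq_square)
    finally show ?thesis using mpos by (simp add: field_simps)
  qed
  have Aii: "0 \<le> A$i$i" using Apos[of "axis i 1"] by (simp add: quad_axis)
  have "b * (1 + A$i$i * m) \<le> m" by (rule final_ineq[OF cs c0 h3 Aii mpos])
  thus ?thesis using invM invP by (simp add: bN N_def P_def Q_def m_def)
qed

theorem lemma3:
  fixes A M :: "real^'m^'m"
  assumes "is_diag_mat A" and "psd_mat A"
    and "pd_mat M"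
  shows "loewner_ge (matrix_inv (matrix_inv (diag_part M) + A))
                    (diag_part (matrix_inv (matrix_inv M + A)))"
proof -
  have Mpos: "0 < M$i$i" for i
    using assms(3) quad_axis[of i M] unfolding pd_mat_def
    by (metis axis_eq_0_iff zero_neq_one)
  have Aii: "0 \<le> A$i$i" for i using assms(2) quad_axis[of i A] unfolding psd_mat_def by metis
  have "matrix_inv (diag_part M) = dg (\<lambda>i. inverse (M$i$i))"
    unfolding diag_part_dg by (rule dg_inv) (metis Mpos less_irrefl)
  hence e1: "matrix_inv (diag_part M) + A = dg (\<lambda>i. inverse (M$i$i) + A$i$i)"
    by (subst is_diag_dg[OF assms(1)]) (simp add: dg_add)
  have pos: "0 < inverse (M$i$i) + A$i$i" for i using Mpos[of i] Aii[of i] by (smt (verit) inverse_positive_iff_positive)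
  have e2: "matrix_inv (matrix_inv (diag_part M) + A) = dg (\<lambda>i. inverse (inverse (M$i$i) + A$i$i))"
    unfolding e1 by (rule dg_inv) (metis pos less_irrefl)
  show ?thesis
    unfolding loewner_ge_def e2 unfolding diag_part_dg dg_diff
  proof (rule dg_psd)
    fix i
    let ?N = "matrix_inv (matrix_inv M + A)"
    have k: "?N $ i $ i * (1 + A$i$i * M$i$i) \<le> M$i$i" using key[OF assms] by blast
    have "inverse (inverse (M$i$i) + A$i$i) = M$i$i / (1 + A$i$i * M$i$i)"
      using Mpos[of i] by (simp add: field_simps)
    moreover have "0 < 1 + A$i$i * M$i$i" using Mpos[of i] Aii[of i] by (smt (verit) mult_nonneg_nonneg)
    ultimately show "0 \<le> inverse (inverse (M$i$i) + A$i$i) - ?N $ i $ i"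
      using k by (simp add: pos_le_divide_eq)
  qed
qed

end
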